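(* Let $n \geq 2$ be an integer, let $p(x) \in \mathcal{T}_n$, and let $q(x) \in \mathcal{J}(p(x))$. Then $q(x) = \gcd(p(x), p'(x)) \cdot f(x)$ for some monic real-rooted integer polynomial $f(x)$ that interlaces $\mathrm{Min}(p,x)$.
   Context: A nonzero real polynomial is real-rooted if all its complex roots are real. For $n\ge1$, a Seidel trace polynomial of degree $n$ is a real-rooted polynomial $p(x)=\sum_{i=0}^n a_i x^{n-i}\in\mathbb{Z}[x]$ of degree $n$ with $a_0=1$, $a_1=0$, and $a_2=-\binom{n}{2}$ if $n\ge2$; $\mathcal{T}_n$ is the set of these. For real-rooted $p,q$ with $\deg p = m$, $\deg q = m-1$, roots $\lambda_1\le\dots\le\lambda_m$ of $p$ and $\mu_1\le\dots\le\mu_{m-1}$ of $q$, we say $q$ interlaces $p$ if $\lambda_i \le \mu_i \le \lambda_{i+1}$ for all $i\in\{1,\dots,m-1\}$. For $p\in\mathcal{T}_n$, $\mathcal{J}(p(x))$ is the set of integer polynomials $q(x)$ of degree $n-1$ with $q\in\mathcal{T}_{n-1}$ and $q$ interlacing $p$. Here $\gcd(p(x),p'(x))$ is the monic gcd, and $\mathrm{Min}(p,x) := p(x)/\gcd(p(x),p'(x))$, which is monic with simple roots, the same set of roots as $p$. *)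

theory Defs
  imports "HOL-Computational_Algebra.Computational_Algebra" "HOL-Computational_Algebra.Field_as_Ring"
begin

abbreviation rpoly :: "int poly \<Rightarrow> real poly" where
  "rpoly p \<equiv> map_poly real_of_int p"

definition real_rooted :: "real poly \<Rightarrow> bool" where
  "real_rooted p \<longleftrightarrow> p \<noteq> 0 \<and>
     (\<forall>z::complex. poly (map_poly complex_of_real p) z = 0 \<longrightarrow> z \<in> \<real>)"

text \<open>Seidel trace polynomials of degree n (as integer polynomials).
  With p = sum a_i x^(n-i): a_0 = coeff p n, a_1 = coeff p (n-1), a_2 = coeff p (n-2).\<close>
definition seidel_trace :: "nat \<Rightarrow> int poly set" where
  "seidel_trace n = {p. n \<ge> 1 \<and> real_rooted (rpoly p) \<and> degree p = n \<and>
      coeff p n = 1 \<and> coeff p (n - 1) = 0 \<and>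
      (n \<ge> 2 \<longrightarrow> coeff p (n - 2) = - int (n choose 2))}"

definition interlaces :: "real poly \<Rightarrow> real poly \<Rightarrow> bool" where
  "interlaces q p \<longleftrightarrow> real_rooted p \<and> real_rooted q \<and> degree q + 1 = degree p \<and>
     (\<exists>ls us. sorted ls \<and> sorted us \<and> length ls = degree p \<and> length us = degree q \<and>
        p = smult (lead_coeff p) (\<Prod>l\<leftarrow>ls. [:-l, 1:]) \<and>
        q = smult (lead_coeff q) (\<Prod>u\<leftarrow>us. [:-u, 1:]) \<and>
        (\<forall>i < degree q. ls ! i \<le> us ! i \<and> us ! i \<le> ls ! (i + 1)))"

definition J_set :: "nat \<Rightarrow> int poly \<Rightarrow> int poly set" where
  "J_set n p = {q. degree q = n - 1 \<and> q \<in> seidel_trace (n - 1) \<and>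
                   interlaces (rpoly q) (rpoly p)}"

text \<open>Min(p) = p / gcd(p, p'), with the monic gcd (gcd of real polynomials is normalized, i.e. monic).\<close>
definition Min_poly :: "real poly \<Rightarrow> real poly" where
  "Min_poly p = p div gcd p (pderiv p)"

end

theory Submission imports Defs "Berlekamp_Zassenhaus.Factor_Bound" begin

interpretation crh: map_poly_inj_idom_hom "complex_of_real" ..
interpretation rr: field_hom' "of_rat :: rat \<Rightarrow> real" by standard


definition lin :: "real multiset \<Rightarrow> real poly" where
  "lin M = prod_mset (image_mset (\<lambda>a. [:-a, 1:]) M)"

lemma lin_simps[simp]: "lin {#} = 1" "lin (add_mset a M) = [:-a,1:] * lin M"
  "lin (M + N) = lin M * lin N"
  by (simp_all add: lin_def)

lemma lin_nz[simp]: "lin M \<noteq> 0"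
proof (induct M)
  case (add a M)
  have nz: "[:-a,1:] \<noteq> (0::real poly)" by simp
  show ?case using nz add.hyps by (metis lin_simps(2) mult_eq_0_iff)
qed simp

lemma lin_lead[simp]: "lead_coeff (lin M) = 1"
proof (induct M)
  case (add a M)
  have l1: "lead_coeff [:-a,1:] = (1::real)" by simp
  show ?case using l1 add.hyps by (metis lin_simps(2) lead_coeff_mult mult_1)
qed simp

lemma lin_degree[simp]: "degree (lin M) = size M"
proof (induct M)
  case (add a M)
  have nz: "[:-a,1:] \<noteq> (0::real poly)" by simp
  have d1: "degree [:-a,1:] = (1::nat)" by simp
  show ?case using degree_mult_eq[OF nz lin_nz[of M]] d1 add.hyps by (simp only: lin_simps(2)) simp
qed simp

lemma lin_order[simp]: "Polynomial.order x (lin M) = count M x"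
proof (induct M)
  case (add a M)
  have nz: "[:-a,1:] \<noteq> (0::real poly)" by simp
  have "Polynomial.order x ([:-a,1:] * lin M) = Polynomial.order x [:-a,1:] + Polynomial.order x (lin M)"
    by (rule order_mult) (metis lin_nz nz mult_eq_0_iff)
  then have "Polynomial.order x (lin (add_mset a M)) = Polynomial.order x [:-a,1:] + count M x"
    using add.hyps by (simp only: lin_simps(2))
  moreover have "Polynomial.order x [:-a,1:] = (if a = x then 1 else 0)"
    using order_linear'[of x "-a"] by auto
  ultimately show ?case by simp
qed (simp add: order_0I)

lemma lin_list: "(\<Prod>l\<leftarrow>ls. [:-l, 1:]) = lin (mset ls)"
  by (induct ls) auto

lemma lin_poly: "poly (lin M) x = 0 \<longleftrightarrow> x \<in># M"
  by (simp add: order_root)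

lemma lin_rr: "real_rooted (lin M)"
  unfolding real_rooted_def
proof (induct M)
  case empty
  then show ?case by simp
next
  case (add a M)
  have e: "map_poly complex_of_real (lin (add_mset a M)) = map_poly complex_of_real [:-a,1:] * map_poly complex_of_real (lin M)"
    by (simp only: lin_simps(2) crh.hom_mult)
  have "poly (map_poly complex_of_real (lin (add_mset a M))) z = 0 \<Longrightarrow> z \<in> \<real>" for z
  proof -
    assume "poly (map_poly complex_of_real (lin (add_mset a M))) z = 0"
    then have "poly (map_poly complex_of_real [:-a,1:]) z = 0 \<or> poly (map_poly complex_of_real (lin M)) z = 0"
      unfolding e poly_mult by simp
    then show ?thesis using add.hyps by (auto simp: map_poly_pCons)
  qed
  then show ?case using lin_nz[of "add_mset a M"] by blast
qed

lemma split_dvd: "A dvd lin M \<Longrightarrow> \<exists>c N. c \<noteq> 0 \<and> A = Polynomial.smult c (lin N)"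
proof (induct M arbitrary: A)
  case empty
  then have "A dvd 1" by simp
  then obtain c where c: "A = [:c:]" "c dvd 1" unfolding is_unit_poly_iff by blast
  then have "c \<noteq> 0" by auto
  moreover have "A = Polynomial.smult c (lin {#})" using c(1) by simp
  ultimately show ?case by blast
next
  case (add a M)
  have nz: "[:-a,1:] \<noteq> (0::real poly)" by simp
  have dv: "A dvd [:-a,1:] * lin M" using add.prems by (simp only: lin_simps(2))
  show ?case
  proof (cases "poly A a = 0")
    case True
    then have "[:-a,1:] dvd A" by (simp only: poly_eq_0_iff_dvd)
    then obtain A' where A': "A = [:-a,1:] * A'" by (rule dvdE)
    have "A' dvd lin M" using dv unfolding A' using nz by (simp only: dvd_mult_cancel_left) simp
    from add.hyps[OF this] obtain c N where cN: "c \<noteq> 0" "A' = Polynomial.smult c (lin N)" by blast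
    have "A = Polynomial.smult c (lin (add_mset a N))"
      unfolding A' cN(2) lin_simps(2) by (rule mult_smult_right)
    then show ?thesis using cN(1) by blast
  next
    case False
    have pr: "prime_elem [:-a,1:]" by (rule prime_elem_linear_field_poly) simp
    have "\<not> [:-a,1:] dvd A" using False by (simp add: poly_eq_0_iff_dvd)
    then have "algebraic_semidom_class.coprime [:-a,1:] A" using pr by (simp add: prime_elem_imp_coprime)
    then have "algebraic_semidom_class.coprime A [:-a,1:]" by (rule algebraic_semidom_class.coprime_commute[THEN iffD1])
    then have "A dvd lin M" using coprime_dvd_mult_right_iff[of A "[:-a,1:]" "lin M"] dv by blast
    then show ?thesis using add.hyps by blast
  qed
qed

definition dclosed :: "(real \<Rightarrow> bool) \<Rightarrow> bool" where
  "dclosed P \<longleftrightarrow> (\<forall>x y. x \<le> y \<longrightarrow> P y \<longrightarrow> P x)"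

lemma sorted_filter_idx:
  assumes "sorted xs" "dclosed P" "i < length xs"
  shows "P (xs!i) \<longleftrightarrow> i < length (filter P xs)"
  using assms
proof (induct xs arbitrary: i)
  case Nil
  then show ?case by simp
next
  case (Cons a ys)
  show ?case
  proof (cases "P a")
    case True
    then show ?thesis using Cons by (cases i) auto
  next
    case False
    have "\<forall>y\<in>set ys. \<not> P y" using Cons.prems False unfolding dclosed_def by auto
    then have "filter P ys = []" by (simp add: filter_empty_conv)
    moreover have "\<not> P ((a#ys)!i)"
      using \<open>\<forall>y\<in>set ys. \<not> P y\<close> False Cons.prems(3) by (cases i) auto
    ultimately show ?thesis using False by simp
  qed
qed

lemma interlace_cnt:
  assumes "sorted ls" "sorted us" "length ls = length us + 1"
    "\<forall>i<length us. ls!i \<le> us!i \<and> us!i \<le> ls!(i+1)" "dclosed P"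
  shows "length (filter P us) \<le> length (filter P ls) \<and>
         length (filter P ls) \<le> length (filter P us) + 1"
proof
  let ?k = "length (filter P us)"
  show "?k \<le> length (filter P ls)"
  proof (cases "?k = 0")
    case False
    have kl: "?k \<le> length us" by simp
    have k1: "?k - 1 < length us" using kl False by linarith
    have "P (us!(?k-1))" using sorted_filter_idx[OF assms(2) assms(5) k1] False by simp
    moreover have "ls!(?k-1) \<le> us!(?k-1)" using assms(4) k1 by blast
    ultimately have "P (ls!(?k-1))" using assms(5) unfolding dclosed_def by blast
    then have "?k - 1 < length (filter P ls)"
      using sorted_filter_idx[OF assms(1) assms(5), of "?k-1"] k1 assms(3) by simp
    then show ?thesis by simp
  qed simp
next
  let ?k = "length (filter P ls)"
  show "?k \<le> length (filter P us) + 1"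
  proof (cases "?k \<le> 1")
    case False
    have kl: "?k \<le> length ls" by simp
    have k1: "?k - 1 < length ls" using kl False by linarith
    have "P (ls!(?k-1))" using sorted_filter_idx[OF assms(1) assms(5) k1] False by simp
    moreover have "us!(?k-2) \<le> ls!(?k-2+1)" using assms(4,3) kl False by simp
    moreover have "?k-2+1 = ?k-1" using False by simp
    ultimately have "P (us!(?k-2))" using assms(5) unfolding dclosed_def by metis
    then have "?k - 2 < length (filter P us)"
      using sorted_filter_idx[OF assms(2) assms(5), of "?k-2"] kl assms(3) False by simp
    then show ?thesis by simp
  qed simp
qed

lemma cnt_interlace:
  fixes ds vs :: "real list"
  assumes "sorted ds" "sorted vs" "length ds = length vs + 1"
    "\<And>t. length (filter (\<lambda>x. x \<le> t) vs) \<le> length (filter (\<lambda>x. x \<le> t) ds) \<and>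
         length (filter (\<lambda>x. x \<le> t) ds) \<le> length (filter (\<lambda>x. x \<le> t) vs) + 1"
    "i < length vs"
  shows "ds!i \<le> vs!i \<and> vs!i \<le> ds!(i+1)"
proof
  have dc: "dclosed (\<lambda>x. x \<le> t)" for t :: real unfolding dclosed_def by auto
  have "i < length (filter (\<lambda>x. x \<le> vs!i) vs)"
    using sorted_filter_idx[OF assms(2) dc[of "vs!i"] assms(5)] by simp
  then have "i < length (filter (\<lambda>x. x \<le> vs!i) ds)" using assms(4)[of "vs!i"] by linarith
  moreover have "i < length ds" using assms(3,5) by simp
  ultimately show "ds!i \<le> vs!i" using sorted_filter_idx[OF assms(1) dc[of "vs!i"], of i] by simp
  have "i+1 < length (filter (\<lambda>x. x \<le> ds!(i+1)) ds)"
    using sorted_filter_idx[OF assms(1) dc[of "ds!(i+1)"], of "i+1"] assms(3,5) by simp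
  then have "i < length (filter (\<lambda>x. x \<le> ds!(i+1)) vs)" using assms(4)[of "ds!(i+1)"] by linarith
  then show "vs!i \<le> ds!(i+1)" using sorted_filter_idx[OF assms(2) dc[of "ds!(i+1)"] assms(5)] by simp
qed


lemma count_cnt: "count (mset xs) (x::real) + length (filter (\<lambda>y. y < x) xs) = length (filter (\<lambda>y. y \<le> x) xs)"
  by (induct xs) auto

lemma cnt_mset: "length (filter P xs) = size (filter_mset P (mset xs))"
  by (metis mset_filter size_mset)

lemma rat_real_int: "map_poly of_rat (map_poly rat_of_int p) = rpoly p"
  by (simp add: map_poly_map_poly o_def)

lemma gcd_int_part:
  fixes p :: "int poly"
  assumes "lead_coeff p = 1"
  shows "\<exists>G1. lead_coeff G1 = 1 \<and> gcd (rpoly p) (pderiv (rpoly p)) = rpoly G1"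
proof -
  define G where "G = gcd p (pderiv p)"
  have "map_poly of_rat (map_poly rat_of_int (pderiv p)) = rpoly (pderiv p)" by (rule rat_real_int)
  also have "\<dots> = pderiv (rpoly p)" by (rule of_int_hom.map_poly_pderiv)
  finally have d: "pderiv (rpoly p) = map_poly of_rat (map_poly rat_of_int (pderiv p))" by (rule sym)
  have "gcd (rpoly p) (pderiv (rpoly p)) =
        map_poly of_rat (gcd (map_poly rat_of_int p) (map_poly rat_of_int (pderiv p)))"
    unfolding d rr.map_poly_gcd by (simp only: rat_real_int)
  also have "\<dots> = map_poly of_rat (Polynomial.smult (inverse (rat_of_int (lead_coeff G))) (map_poly rat_of_int G))"
    unfolding G_def by (subst gcd_rat_to_gcd_int) (rule refl)
  also have "\<dots> = Polynomial.smult (inverse (real_of_int (lead_coeff G))) (rpoly G)"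
    unfolding of_rat_hom.map_poly_hom_smult rat_real_int of_rat_inverse of_rat_of_int_eq ..
  finally have g: "gcd (rpoly p) (pderiv (rpoly p)) = Polynomial.smult (inverse (real_of_int (lead_coeff G))) (rpoly G)" .
  have "G dvd p" unfolding G_def by (rule gcd_dvd1)
  then obtain H where pH: "p = G * H" by (rule dvdE)
  have "lead_coeff p = lead_coeff G * lead_coeff H" unfolding pH by (rule lead_coeff_mult)
  then have "lead_coeff G * lead_coeff H = 1" using assms by simp
  then have "lead_coeff G dvd 1" by (rule dvdI[OF sym])
  then have l: "\<bar>lead_coeff G\<bar> = 1" by (simp add: zdvd1_eq)
  then have "inverse (real_of_int (lead_coeff G)) = real_of_int (lead_coeff G)"
    by (cases "lead_coeff G \<ge> 0") auto
  then have "gcd (rpoly p) (pderiv (rpoly p)) = rpoly (Polynomial.smult (lead_coeff G) G)"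
    using g by (simp only: of_int_hom.map_poly_hom_smult)
  moreover have "lead_coeff G * lead_coeff G = 1"
    using l abs_mult_self_eq[of "lead_coeff G"] by simp
  then have "lead_coeff (Polynomial.smult (lead_coeff G) G) = 1"
    by (simp only: lead_coeff_smult)
  ultimately show ?thesis by blast
qed

lemma int_quotient:
  fixes q G1 :: "int poly"
  assumes "lead_coeff G1 = 1" "rpoly q = rpoly G1 * F"
  shows "\<exists>d. F = rpoly d"
proof -
  have G0: "G1 \<noteq> 0" using assms(1) by auto
  obtain d r where dr: "pseudo_divmod q G1 = (d, r)" by (metis surj_pair)
  have e0: "Polynomial.smult (lead_coeff G1 ^ (Suc (degree q) - degree G1)) q = G1 * d + r"
    by (rule pseudo_divmod(1)[OF G0 dr])
  have r: "r = 0 \<or> degree r < degree G1" by (rule pseudo_divmod(2)[OF G0 dr])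
  have e: "q = G1 * d + r" using e0 assms(1) by simp
  have e2: "rpoly q = rpoly G1 * rpoly d + rpoly r"
    unfolding e by (simp only: of_int_poly_hom.hom_add of_int_poly_hom.hom_mult)
  have h1: "rpoly G1 * (F - rpoly d) = rpoly r"
    using assms(2) e2 by (simp only: right_diff_distrib)
  have h2: "rpoly G1 \<noteq> 0" using G0 by simp
  have "F - rpoly d = 0"
  proof (rule ccontr)
    assume X: "F - rpoly d \<noteq> 0"
    then have "degree (rpoly G1 * (F - rpoly d)) \<ge> degree (rpoly G1)"
      using h2 by (simp add: degree_mult_eq)
    then have "degree r \<ge> degree G1" using h1 by (simp add: of_int_hom.degree_map_poly_hom)
    moreover have "r \<noteq> 0" using h1 h2 X by auto
    ultimately show False using r by simp
  qed
  then show ?thesis by auto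
qed

theorem proposition4p2:
  fixes n :: nat and p q :: "int poly"
  assumes "n \<ge> 2"
    and "p \<in> seidel_trace n"
    and "q \<in> J_set n p"
  shows "\<exists>f :: int poly. lead_coeff f = 1 \<and> real_rooted (rpoly f) \<and>
           rpoly q = gcd (rpoly p) (pderiv (rpoly p)) * rpoly f \<and>
           interlaces (rpoly f) (Min_poly (rpoly p))"
proof -
  have degp: "degree p = n" and cp: "Polynomial.coeff p n = 1"
    using assms(2) unfolding seidel_trace_def by auto
  have degq: "degree q = n - 1" and qs: "q \<in> seidel_trace (n - 1)"
    and il: "interlaces (rpoly q) (rpoly p)"
    using assms(3) unfolding J_set_def by auto
  have cq: "Polynomial.coeff q (n - 1) = 1" using qs unfolding seidel_trace_def by auto
  have lp: "lead_coeff p = 1" using degp cp by simp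
  have lq: "lead_coeff q = 1" using degq cq by simp
  define P where "P = rpoly p"
  define Q where "Q = rpoly q"
  have lP: "lead_coeff P = 1" unfolding P_def using lp by (simp add: of_int_hom.hom_lead_coeff)
  have lQ: "lead_coeff Q = 1" unfolding Q_def using lq by (simp add: of_int_hom.hom_lead_coeff)
  have dP: "degree P = n" unfolding P_def using degp by (simp add: of_int_hom.degree_map_poly_hom)
  have dQ: "degree Q = n - 1" unfolding Q_def using degq by (simp add: of_int_hom.degree_map_poly_hom)
  from il obtain ls us where ls: "sorted ls" and us: "sorted us" and lls: "length ls = degree P"
     and lus: "length us = degree Q"
     and Pf: "P = Polynomial.smult (lead_coeff P) (\<Prod>l\<leftarrow>ls. [:-l, 1:])"
     and Qf: "Q = Polynomial.smult (lead_coeff Q) (\<Prod>u\<leftarrow>us. [:-u, 1:])"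
     and ilv: "\<forall>i < degree Q. ls ! i \<le> us ! i \<and> us ! i \<le> ls ! (i + 1)"
    unfolding interlaces_def P_def Q_def by blast
  define L where "L = mset ls"
  define U where "U = mset us"
  have PL: "P = lin L"
  proof -
    have "P = Polynomial.smult 1 (\<Prod>l\<leftarrow>ls. [:-l, 1:])" using Pf unfolding lP .
    then show ?thesis unfolding smult_1_left lin_list L_def .
  qed
  have QU: "Q = lin U"
  proof -
    have "Q = Polynomial.smult 1 (\<Prod>l\<leftarrow>us. [:-l, 1:])" using Qf unfolding lQ .
    then show ?thesis unfolding smult_1_left lin_list U_def .
  qed
  have lenlu: "length ls = length us + 1" using lls lus dP dQ assms(1) by simp
  have ilv': "\<forall>i<length us. ls!i \<le> us!i \<and> us!i \<le> ls!(i+1)" using ilv lus by simp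
  define g where "g = gcd P (pderiv P)"
  define Mn where "Mn = Min_poly P"
  have Mn_eq: "Mn = P div g" unfolding Mn_def Min_poly_def g_def ..
  have gP: "g dvd P" unfolding g_def by simp
  have PgM: "P = g * Mn" unfolding Mn_eq using gP by simp
  have P0: "P \<noteq> 0" using PL by simp
  have dP0: "pderiv P \<noteq> 0" using dP assms(1) by (simp add: pderiv_eq_0_iff)
  have "g dvd pderiv P" unfolding g_def by simp
  then obtain e where e: "pderiv P = e * g" by (metis dvd_def mult.commute)
  have bez: "g = fst (bezout_coefficients P (pderiv P)) * P + snd (bezout_coefficients P (pderiv P)) * pderiv P"
    using bezout_coefficients_fst_snd[of P "pderiv P"] unfolding g_def by simp
  have PMg: "P = Mn * g" using PgM by (simp add: mult.commute)
  have sq: "rsquarefree Mn \<and> (\<forall>a. (poly Mn a = 0) = (poly P a = 0))"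
    by (rule poly_squarefree_decomp[OF dP0 PMg e bez])
  obtain G1 where G1: "lead_coeff G1 = 1" "g = rpoly G1"
    using gcd_int_part[OF lp] unfolding g_def P_def by blast
  have lg: "lead_coeff g = 1" using G1 by (simp add: of_int_hom.hom_lead_coeff)
  obtain c N where cN: "c \<noteq> 0" "g = Polynomial.smult c (lin N)"
    using split_dvd gP PL by metis
  have c1: "c = 1"
  proof -
    have "lead_coeff g = c * lead_coeff (lin N)" unfolding cN(2) by (rule lead_coeff_smult)
    then show ?thesis using lg unfolding lin_lead by simp
  qed
  have MnP: "Mn dvd P" using PgM by simp
  obtain c' K where cK: "c' \<noteq> 0" "Mn = Polynomial.smult c' (lin K)"
    using split_dvd MnP PL by metis
  define ds where "ds = remdups ls"
  define D where "D = mset ds"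
  have cD: "count D x = (if x \<in># L then 1 else 0)" for x
  proof -
    have "distinct ds" unfolding ds_def by simp
    then show ?thesis using distinct_count_atmost_1[of ds] unfolding D_def L_def ds_def by simp
  qed
  have KD: "K = D"
  proof (rule multiset_eqI)
    fix x
    have o: "count K x = Polynomial.order x Mn" using cK by (simp add: order_smult)
    have Mn0: "Mn \<noteq> 0" using cK by simp
    have le1: "count K x \<le> 1" using o sq unfolding rsquarefree_def' by simp
    have h: "count K x \<noteq> 0 \<longleftrightarrow> x \<in># L"
      using o sq Mn0 order_root[of Mn x] lin_poly[of L x] PL by auto
    show "count K x = count D x"
    proof (cases "x \<in># L")
      case True
      then have "count K x \<noteq> 0" "count D x = 1" using h cD[of x] by auto
      then show ?thesis using le1 by linarith
    next
      case False
      then have "\<not> count K x \<noteq> 0" "count D x = 0" using h cD[of x] by auto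
      then show ?thesis by linarith
    qed
  qed
  have LND: "L = N + D"
  proof (rule multiset_eqI)
    fix x
    have "count L x = Polynomial.order x P" using PL by simp
    also have "\<dots> = Polynomial.order x g + Polynomial.order x Mn"
      using PgM P0 order_mult[of g Mn x] by simp
    also have "\<dots> = count N x + count D x" using cN cK KD by (simp add: order_smult)
    finally show "count L x = count (N + D) x" by simp
  qed
  have c'1: "c' = 1"
  proof -
    have "lead_coeff P = lead_coeff g * lead_coeff Mn" using PgM by (simp only: lead_coeff_mult)
    moreover have "lead_coeff Mn = c' * lead_coeff (lin K)" unfolding cK(2) by (rule lead_coeff_smult)
    ultimately show ?thesis using lP lg unfolding lin_lead by simp
  qed
  have gN: "g = lin N" using cN c1 by simp
  have MnD: "Mn = lin D" using cK c'1 KD by simp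
  have dcle: "dclosed (\<lambda>y. y \<le> t)" for t :: real unfolding dclosed_def by auto
  have dclt: "dclosed (\<lambda>y. y < t)" for t :: real unfolding dclosed_def by auto
  have NU: "N \<subseteq># U"
  proof (rule mset_subset_eqI)
    fix x
    show "count N x \<le> count U x"
    proof (cases "x \<in># L")
      case True
      then have "count L x = count N x + 1" using LND cD[of x] by simp
      moreover have "count L x + length (filter (\<lambda>y. y < x) ls) = length (filter (\<lambda>y. y \<le> x) ls)"
        using count_cnt[of ls x] unfolding L_def .
      moreover have "count U x + length (filter (\<lambda>y. y < x) us) = length (filter (\<lambda>y. y \<le> x) us)"
        using count_cnt[of us x] unfolding U_def .
      moreover have "length (filter (\<lambda>y. y \<le> x) ls) \<le> length (filter (\<lambda>y. y \<le> x) us) + 1"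
        using interlace_cnt[OF ls us lenlu ilv' dcle[of x]] by simp
      moreover have "length (filter (\<lambda>y. y < x) us) \<le> length (filter (\<lambda>y. y < x) ls)"
        using interlace_cnt[OF ls us lenlu ilv' dclt[of x]] by simp
      ultimately show ?thesis by linarith
    next
      case False
      then have "count L x = 0" by (simp add: not_in_iff)
      then show ?thesis using LND by simp
    qed
  qed
  define V where "V = U - N"
  have UNV: "U = N + V" unfolding V_def using NU by (simp add: subset_mset.add_diff_inverse)
  have QgV: "rpoly q = rpoly G1 * lin V" using QU UNV gN G1 unfolding Q_def by simp
  obtain d where d: "lin V = rpoly d" using int_quotient[OF G1(1) QgV] by blast
  define vs where "vs = sorted_list_of_multiset V"
  have vsV: "mset vs = V" unfolding vs_def by simp
  have svs: "sorted vs" unfolding vs_def by simp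
  have sds: "sorted ds" unfolding ds_def using ls by (simp add: sorted_remdups)
  have sizes: "size L = size N + size D" "size U = size N + size V" using LND UNV by simp_all
  have sL: "size L = n" using lls dP unfolding L_def by simp
  have sU: "size U = n - 1" using lus dQ unfolding U_def by simp
  have sVD: "size V + 1 = size D" using sizes sL sU assms(1) by linarith
  have lds: "length ds = size D" unfolding D_def by simp
  have lvs: "length vs = size V" using vsV by (metis size_mset)
  have cnts: "length (filter (\<lambda>x. x \<le> t) vs) \<le> length (filter (\<lambda>x. x \<le> t) ds) \<and>
         length (filter (\<lambda>x. x \<le> t) ds) \<le> length (filter (\<lambda>x. x \<le> t) vs) + 1" for t
  proof -
    let ?f = "\<lambda>M. size (filter_mset (\<lambda>x. x \<le> t) M)"
    have a: "length (filter (\<lambda>x. x \<le> t) us) \<le> length (filter (\<lambda>x. x \<le> t) ls) \<and>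
         length (filter (\<lambda>x. x \<le> t) ls) \<le> length (filter (\<lambda>x. x \<le> t) us) + 1"
      using interlace_cnt[OF ls us lenlu ilv' dcle[of t]] .
    have "?f L = ?f N + ?f D" "?f U = ?f N + ?f V" using LND UNV by simp_all
    moreover have "?f U \<le> ?f L \<and> ?f L \<le> ?f U + 1" using a unfolding cnt_mset L_def U_def .
    ultimately have "?f V \<le> ?f D \<and> ?f D \<le> ?f V + 1" by linarith
    then show ?thesis unfolding cnt_mset vsV D_def[symmetric] .
  qed
  have idx: "\<forall>i<length vs. ds!i \<le> vs!i \<and> vs!i \<le> ds!(i+1)"
    using cnt_interlace[OF sds svs _ cnts] lds lvs sVD by simp
  have f1: "length ds = degree (lin D)" "length vs = degree (lin V)" using lds lvs by simp_all
  have f2: "lin D = Polynomial.smult (lead_coeff (lin D)) (\<Prod>l\<leftarrow>ds. [:- l, 1:])"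
    unfolding lin_lead smult_1_left lin_list D_def ..
  have f3: "lin V = Polynomial.smult (lead_coeff (lin V)) (\<Prod>l\<leftarrow>vs. [:- l, 1:])"
    unfolding lin_lead smult_1_left lin_list vsV ..
  have f4: "\<forall>i<degree (lin V). ds ! i \<le> vs ! i \<and> vs ! i \<le> ds ! (i + 1)"
    using idx lvs by simp
  have f5: "degree (lin V) + 1 = degree (lin D)" using sVD by simp
  have ex: "\<exists>ls us. sorted ls \<and> sorted us \<and> length ls = degree (lin D) \<and> length us = degree (lin V) \<and>
        lin D = Polynomial.smult (lead_coeff (lin D)) (\<Prod>l\<leftarrow>ls. [:-l, 1:]) \<and>
        lin V = Polynomial.smult (lead_coeff (lin V)) (\<Prod>u\<leftarrow>us. [:-u, 1:]) \<and>
        (\<forall>i < degree (lin V). ls ! i \<le> us ! i \<and> us ! i \<le> ls ! (i + 1))"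
    using sds svs f1 f2 f3 f4 by blast
  have "interlaces (lin V) (lin D)"
    unfolding interlaces_def using lin_rr[of D] lin_rr[of V] f5 ex by blast
  then have "interlaces (rpoly d) (Min_poly (rpoly p))"
    using d MnD unfolding Mn_def P_def by simp
  moreover have "lead_coeff d = 1"
  proof -
    have "real_of_int (lead_coeff d) = lead_coeff (rpoly d)" by (simp add: of_int_hom.hom_lead_coeff)
    also have "\<dots> = lead_coeff (lin V)" by (simp only: d)
    also have "\<dots> = 1" by (rule lin_lead)
    finally show ?thesis by simp
  qed
  moreover have "real_rooted (rpoly d)" using d lin_rr by metis
  moreover have "rpoly q = gcd (rpoly p) (pderiv (rpoly p)) * rpoly d"
    using QgV G1(2) d unfolding g_def P_def by simp
  ultimately show ?thesis by blast
qed

end
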